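(* Let $L,M$ be distributive lattices and $T:\mathrm{FBL}\langle L\rangle\to\mathrm{FBL}\langle M\rangle$ a (linear) lattice homomorphism. For $y^*\in M^*$ define $\Phi_T(y^* ):L\to\mathbb R$ by $\Phi_T(y^* )(x)=(T\delta_x)(y^* )$. Then: (1) for every $y^*\in M^*$, $\Phi_T(y^* )$ is a lattice homomorphism $L\to\mathbb R$; (2) $|\Phi_T(y^* )(x)|\le\|T\|$ for all $y^*\in M^*$, $x\in L$; in particular, if $\|T\|\le1$ then $\Phi_T(M^* )\subseteq L^*$; (3) $\Phi_T$ is positively homogeneous: if $y^*\in M^*$, $\lambda\ge0$ and $\lambda y^*\in M^*$, then $\Phi_T(\lambda y^* )=\lambda\Phi_T(y^* )$; (4) if $\|T\|\le1$, then $(Tf)(y^* )=f(\Phi_T(y^* ))$ for every $f\in\mathrm{FBL}\langle L\rangle$ and $y^*\in M^*$.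
   Context: For a distributive lattice $L$, $L^*$ is the set of all lattice homomorphisms $x^*:L\to[-1,1]$; for $x\in L$, $\delta_x:L^*\to\mathbb R$ is $\delta_x(x^* )=x^*(x)$. A function $f:L^*\to\mathbb R$ is positively homogeneous if $f(\lambda x^* )=\lambda f(x^* )$ whenever $\lambda\ge0$ and $\lambda x^*\in L^*$; for such $f$, $\|f\|=\sup\{\sum_{i=1}^m|f(x_i^* )|: m\in\mathbb N,\ x_i^*\in L^*,\ \sup_{x\in L}\sum_{i=1}^m|x_i^*(x)|\le1\}$. $\mathrm{FBL}\langle L\rangle$ is the norm closure of the vector sublattice generated by $\{\delta_x:x\in L\}$ inside the Banach lattice of positively homogeneous functions on $L^*$ with finite norm, with pointwise order and operations (so its elements are functions on $L^*$ and point evaluations are continuous). *)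

theory Defs
  imports Complex_Main
begin

definition lattice_hom_real :: "('a::lattice \<Rightarrow> real) \<Rightarrow> bool" where
  "lattice_hom_real f \<longleftrightarrow>
     (\<forall>x y. f (inf x y) = min (f x) (f y) \<and> f (sup x y) = max (f x) (f y))"

definition lstar :: "('a::distrib_lattice \<Rightarrow> real) set" where
  "lstar = {xs. lattice_hom_real xs \<and> (\<forall>x. \<bar>xs x\<bar> \<le> 1)}"

text \<open>Functions on L^* are represented as functions on all of 'a \<Rightarrow> real which vanish
  outside L^* (the values outside L^* carry no information).\<close>
definition delta :: "'a::distrib_lattice \<Rightarrow> ('a \<Rightarrow> real) \<Rightarrow> real" where
  "delta x = (\<lambda>xs. if xs \<in> lstar then xs x else 0)"

definition pos_hom :: "(('a::distrib_lattice \<Rightarrow> real) \<Rightarrow> real) \<Rightarrow> bool" where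
  "pos_hom f \<longleftrightarrow>
     (\<forall>xs\<in>lstar. \<forall>c::real. c \<ge> 0 \<longrightarrow> (\<lambda>x. c * xs x) \<in> lstar \<longrightarrow> f (\<lambda>x. c * xs x) = c * f xs)
     \<and> (\<forall>xs. xs \<notin> lstar \<longrightarrow> f xs = 0)"

definition fbl_sums :: "(('a::distrib_lattice \<Rightarrow> real) \<Rightarrow> real) \<Rightarrow> real set" where
  "fbl_sums f = {(\<Sum>i<m. \<bar>f (xs i)\<bar>) | (m::nat) xs.
      (\<forall>i<m. xs i \<in> lstar) \<and> (\<forall>x. (\<Sum>i<m. \<bar>xs i x\<bar>) \<le> 1)}"

definition fbl_norm :: "(('a::distrib_lattice \<Rightarrow> real) \<Rightarrow> real) \<Rightarrow> real" where
  "fbl_norm f = Sup (fbl_sums f)"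

definition has_finite_norm :: "(('a::distrib_lattice \<Rightarrow> real) \<Rightarrow> real) \<Rightarrow> bool" where
  "has_finite_norm f \<longleftrightarrow> bdd_above (fbl_sums f)"

inductive_set fbl_gen :: "(('a::distrib_lattice \<Rightarrow> real) \<Rightarrow> real) set" where
  gen_delta: "delta x \<in> fbl_gen"
| gen_zero: "(\<lambda>_. 0) \<in> fbl_gen"
| gen_add: "f \<in> fbl_gen \<Longrightarrow> g \<in> fbl_gen \<Longrightarrow> (\<lambda>xs. f xs + g xs) \<in> fbl_gen"
| gen_scale: "f \<in> fbl_gen \<Longrightarrow> (\<lambda>xs. c * f xs) \<in> fbl_gen"
| gen_sup: "f \<in> fbl_gen \<Longrightarrow> g \<in> fbl_gen \<Longrightarrow> (\<lambda>xs. max (f xs) (g xs)) \<in> fbl_gen"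
| gen_inf: "f \<in> fbl_gen \<Longrightarrow> g \<in> fbl_gen \<Longrightarrow> (\<lambda>xs. min (f xs) (g xs)) \<in> fbl_gen"

definition FBL :: "(('a::distrib_lattice \<Rightarrow> real) \<Rightarrow> real) set" where
  "FBL = {f. pos_hom f \<and> has_finite_norm f \<and>
            (\<forall>e>0. \<exists>g\<in>fbl_gen. fbl_norm (\<lambda>xs. f xs - g xs) < e)}"

definition fbl_lattice_hom ::
  "((('a::distrib_lattice \<Rightarrow> real) \<Rightarrow> real) \<Rightarrow> (('b::distrib_lattice \<Rightarrow> real) \<Rightarrow> real)) \<Rightarrow> bool" where
  "fbl_lattice_hom T \<longleftrightarrow>
     (\<forall>f\<in>FBL. T f \<in> FBL)
   \<and> (\<forall>f\<in>FBL. \<forall>g\<in>FBL. T (\<lambda>xs. f xs + g xs) = (\<lambda>ys. T f ys + T g ys))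
   \<and> (\<forall>f\<in>FBL. \<forall>c::real. T (\<lambda>xs. c * f xs) = (\<lambda>ys. c * T f ys))
   \<and> (\<forall>f\<in>FBL. \<forall>g\<in>FBL. T (\<lambda>xs. max (f xs) (g xs)) = (\<lambda>ys. max (T f ys) (T g ys)))
   \<and> (\<forall>f\<in>FBL. \<forall>g\<in>FBL. T (\<lambda>xs. min (f xs) (g xs)) = (\<lambda>ys. min (T f ys) (T g ys)))"

definition op_bounded ::
  "((('a::distrib_lattice \<Rightarrow> real) \<Rightarrow> real) \<Rightarrow> (('b::distrib_lattice \<Rightarrow> real) \<Rightarrow> real)) \<Rightarrow> bool" where
  "op_bounded T \<longleftrightarrow> (\<exists>K. \<forall>f\<in>(FBL::(('a \<Rightarrow> real) \<Rightarrow> real) set). fbl_norm (T f) \<le> K * fbl_norm f)"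

definition op_norm ::
  "((('a::distrib_lattice \<Rightarrow> real) \<Rightarrow> real) \<Rightarrow> (('b::distrib_lattice \<Rightarrow> real) \<Rightarrow> real)) \<Rightarrow> real" where
  "op_norm T = Sup {fbl_norm (T f) | f. f \<in> (FBL::(('a \<Rightarrow> real) \<Rightarrow> real) set) \<and> fbl_norm f \<le> 1}"

definition Phi ::
  "((('a::distrib_lattice \<Rightarrow> real) \<Rightarrow> real) \<Rightarrow> (('b::distrib_lattice \<Rightarrow> real) \<Rightarrow> real))
   \<Rightarrow> ('b \<Rightarrow> real) \<Rightarrow> 'a \<Rightarrow> real" where
  "Phi T ys = (\<lambda>x. T (delta x) ys)"

end

theory Submission
  imports Defs
begin


lemma sums_mem:
  fixes m :: nat
  shows "(\<forall>i<m. xs i \<in> lstar) \<Longrightarrow> (\<forall>x. (\<Sum>i<m. \<bar>xs i x\<bar>) \<le> 1)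
   \<Longrightarrow> (\<Sum>i<m. \<bar>f (xs i)\<bar>) \<in> fbl_sums f"
  unfolding fbl_sums_def by blast

lemma sums_E:
  assumes "s \<in> fbl_sums f"
  obtains m :: nat and xs where "s = (\<Sum>i<m. \<bar>f (xs i)\<bar>)" "\<forall>i<m. xs i \<in> lstar"
    "\<forall>x. (\<Sum>i<m. \<bar>xs i x\<bar>) \<le> 1"
  using assms unfolding fbl_sums_def by blast

lemma sums_nonempty: "(0::real) \<in> fbl_sums f"
proof -
  have "(\<Sum>i<(0::nat). \<bar>f ((\<lambda>_. undefined) i)\<bar>) \<in> fbl_sums f" by (rule sums_mem) auto
  then show ?thesis by simp
qed

lemma eval_le_norm:
  assumes "xs \<in> lstar" "has_finite_norm h"
  shows "\<bar>h xs\<bar> \<le> fbl_norm h"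
proof -
  have "(\<Sum>i<(1::nat). \<bar>h ((\<lambda>_. xs) i)\<bar>) \<in> fbl_sums h"
    using sums_mem[of 1 "\<lambda>_. xs" h] assms(1) by (auto simp: lstar_def)
  then show ?thesis using assms(2) unfolding fbl_norm_def has_finite_norm_def
    by (metis (no_types, lifting) cSup_upper lessThan_0 lessThan_Suc One_nat_def sum.empty sum.insert
        finite.emptyI empty_iff add.right_neutral)
qed

lemma norm_nonneg:
  assumes "has_finite_norm h" shows "0 \<le> fbl_norm h"
  using assms sums_nonempty unfolding fbl_norm_def has_finite_norm_def by (meson cSup_upper)

lemma dom:
  assumes "has_finite_norm f" "has_finite_norm g" "a \<ge> 0" "b \<ge> 0"
    "\<forall>xs. \<bar>h xs\<bar> \<le> a*\<bar>f xs\<bar> + b*\<bar>g xs\<bar>"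
  shows "has_finite_norm h \<and> fbl_norm h \<le> a*fbl_norm f + b*fbl_norm g"
proof -
  have key: "s \<le> a*fbl_norm f + b*fbl_norm g" if hs: "s \<in> fbl_sums h" for s
  proof -
    obtain m :: nat and xs where s: "s = (\<Sum>i<m. \<bar>h (xs i)\<bar>)" and c1: "\<forall>i<m. xs i \<in> lstar"
      and c2: "\<forall>x. (\<Sum>i<m. \<bar>xs i x\<bar>) \<le> 1"
      using hs by (rule sums_E)
    have "s \<le> (\<Sum>i<m. a*\<bar>f (xs i)\<bar> + b*\<bar>g (xs i)\<bar>)" unfolding s
      by (rule sum_mono) (use assms(5) in auto)
    also have "\<dots> = a*(\<Sum>i<m. \<bar>f (xs i)\<bar>) + b*(\<Sum>i<m. \<bar>g (xs i)\<bar>)"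
      by (simp add: sum.distrib sum_distrib_left)
    also have "\<dots> \<le> a*fbl_norm f + b*fbl_norm g"
      apply (rule add_mono; rule mult_left_mono)
      using cSup_upper[OF sums_mem[OF c1 c2]] assms unfolding fbl_norm_def has_finite_norm_def
      by auto
    finally show ?thesis .
  qed
  have "bdd_above (fbl_sums h)" using key by (rule bdd_aboveI)
  moreover have "Sup (fbl_sums h) \<le> a*fbl_norm f + b*fbl_norm g"
    by (rule cSup_least) (use sums_nonempty key in auto)
  ultimately show ?thesis unfolding has_finite_norm_def fbl_norm_def by simp
qed

lemma zero_sums: "fbl_sums (\<lambda>_::'a::distrib_lattice \<Rightarrow> real. 0::real) = {0}"
  using sums_nonempty[of "\<lambda>_::'a \<Rightarrow> real. 0::real"] by (auto simp: fbl_sums_def)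

lemma zero_norm: "fbl_norm (\<lambda>_::'a::distrib_lattice \<Rightarrow> real. 0::real) = 0"
  unfolding fbl_norm_def zero_sums by simp

lemma zero_fin: "has_finite_norm (\<lambda>_::'a::distrib_lattice \<Rightarrow> real. 0::real)"
  unfolding has_finite_norm_def zero_sums by simp

lemma delta_fin: "has_finite_norm (delta x)"
proof -
  have "s \<le> 1" if hs: "s \<in> fbl_sums (delta x)" for s
  proof -
    obtain m :: nat and xs where s: "s = (\<Sum>i<m. \<bar>delta x (xs i)\<bar>)" and c1: "\<forall>i<m. xs i \<in> lstar"
      and c2: "\<forall>x. (\<Sum>i<m. \<bar>xs i x\<bar>) \<le> 1"
      using hs by (rule sums_E)
    have "s = (\<Sum>i<m. \<bar>xs i x\<bar>)" unfolding s by (rule sum.cong) (use c1 in \<open>auto simp: delta_def\<close>)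
    then show ?thesis using c2 by simp
  qed
  then show ?thesis unfolding has_finite_norm_def by (rule bdd_aboveI)
qed

lemma delta_norm_le: "fbl_norm (delta x) \<le> 1"
proof -
  have "s \<le> 1" if hs: "s \<in> fbl_sums (delta x)" for s
  proof -
    obtain m :: nat and xs where s: "s = (\<Sum>i<m. \<bar>delta x (xs i)\<bar>)" and c1: "\<forall>i<m. xs i \<in> lstar"
      and c2: "\<forall>x. (\<Sum>i<m. \<bar>xs i x\<bar>) \<le> 1"
      using hs by (rule sums_E)
    have "s = (\<Sum>i<m. \<bar>xs i x\<bar>)" unfolding s by (rule sum.cong) (use c1 in \<open>auto simp: delta_def\<close>)
    then show ?thesis using c2 by simp
  qed
  then show ?thesis unfolding fbl_norm_def by (intro cSup_least) (use sums_nonempty in auto)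
qed

lemma pos_hom_delta: "pos_hom (delta x)"
  unfolding pos_hom_def delta_def by auto

lemma pos_hom_zero: "pos_hom (\<lambda>_::'a::distrib_lattice \<Rightarrow> real. 0::real)"
  unfolding pos_hom_def by auto

lemma pos_hom_add: "pos_hom f \<Longrightarrow> pos_hom g \<Longrightarrow> pos_hom (\<lambda>xs. f xs + g xs)"
  unfolding pos_hom_def by (auto simp: algebra_simps)

lemma pos_hom_scale: "pos_hom f \<Longrightarrow> pos_hom (\<lambda>xs. c * f xs)"
  unfolding pos_hom_def by (auto simp: algebra_simps)

lemma pos_hom_max: "pos_hom f \<Longrightarrow> pos_hom g \<Longrightarrow> pos_hom (\<lambda>xs. max (f xs) (g xs))"
  unfolding pos_hom_def by (auto simp: max_mult_distrib_left)

lemma pos_hom_min: "pos_hom f \<Longrightarrow> pos_hom g \<Longrightarrow> pos_hom (\<lambda>xs. min (f xs) (g xs))"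
  unfolding pos_hom_def by (auto simp: min_mult_distrib_left)

lemma abs_add_le: "\<forall>xs. \<bar>(f xs::real) + g xs\<bar> \<le> 1*\<bar>f xs\<bar> + 1*\<bar>g xs\<bar>"
  by (simp add: abs_triangle_ineq)
lemma abs_diff_le: "\<forall>xs. \<bar>(f xs::real) - g xs\<bar> \<le> 1*\<bar>f xs\<bar> + 1*\<bar>g xs\<bar>"
  by (simp add: abs_triangle_ineq4)
lemma abs_max_le: "\<forall>xs. \<bar>max (f xs::real) (g xs)\<bar> \<le> 1*\<bar>f xs\<bar> + 1*\<bar>g xs\<bar>"
  unfolding max_def by auto
lemma abs_min_le: "\<forall>xs. \<bar>min (f xs::real) (g xs)\<bar> \<le> 1*\<bar>f xs\<bar> + 1*\<bar>g xs\<bar>"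
  unfolding min_def by auto
lemma abs_scale_le: "\<forall>xs. \<bar>c * (f xs::real)\<bar> \<le> \<bar>c\<bar>*\<bar>f xs\<bar> + 0*\<bar>f xs\<bar>"
  by (simp add: abs_mult)

lemma gen_props: "g \<in> fbl_gen \<Longrightarrow> pos_hom g \<and> has_finite_norm g"
proof (induction rule: fbl_gen.induct)
  case (gen_delta x) then show ?case using pos_hom_delta delta_fin by blast
next
  case gen_zero then show ?case using pos_hom_zero zero_fin by blast
next
  case (gen_add f g)
  then have a: "pos_hom f" "has_finite_norm f" "pos_hom g" "has_finite_norm g" by blast+
  show ?case using pos_hom_add[OF a(1,3)] dom[OF a(2,4) zero_le_one zero_le_one abs_add_le] by blast
next
  case (gen_scale f c)
  then have a: "pos_hom f" "has_finite_norm f" by blast+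
  show ?case using pos_hom_scale[OF a(1)] dom[OF a(2,2) abs_ge_zero order_refl abs_scale_le] by blast
next
  case (gen_sup f g)
  then have a: "pos_hom f" "has_finite_norm f" "pos_hom g" "has_finite_norm g" by blast+
  show ?case using pos_hom_max[OF a(1,3)] dom[OF a(2,4) zero_le_one zero_le_one abs_max_le] by blast
next
  case (gen_inf f g)
  then have a: "pos_hom f" "has_finite_norm f" "pos_hom g" "has_finite_norm g" by blast+
  show ?case using pos_hom_min[OF a(1,3)] dom[OF a(2,4) zero_le_one zero_le_one abs_min_le] by blast
qed

lemma gen_FBL: "g \<in> fbl_gen \<Longrightarrow> g \<in> FBL"
proof -
  assume g: "g \<in> fbl_gen"
  have "\<exists>h\<in>fbl_gen. fbl_norm (\<lambda>xs. g xs - h xs) < e" if "e > 0" for e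
    by (rule bexI[of _ g]) (use g that in \<open>auto simp: zero_norm\<close>)
  then show ?thesis unfolding FBL_def using gen_props[OF g] by auto
qed

lemma diff_fin: "has_finite_norm f \<Longrightarrow> has_finite_norm g \<Longrightarrow> has_finite_norm (\<lambda>xs. f xs - g xs)"
  using dom[OF _ _ zero_le_one zero_le_one abs_diff_le] by blast

lemma FBL_add:
  assumes f: "f \<in> FBL" and g: "g \<in> FBL"
  shows "(\<lambda>xs. f xs + g xs) \<in> FBL"
proof -
  have pf: "pos_hom f" "has_finite_norm f" and pg: "pos_hom g" "has_finite_norm g"
    and af: "\<forall>e>0. \<exists>h\<in>fbl_gen. fbl_norm (\<lambda>xs. f xs - h xs) < e"
    and ag: "\<forall>e>0. \<exists>h\<in>fbl_gen. fbl_norm (\<lambda>xs. g xs - h xs) < e"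
    using f g unfolding FBL_def by blast+
  have "\<exists>h\<in>fbl_gen. fbl_norm (\<lambda>xs. f xs + g xs - h xs) < e" if e: "e > 0" for e
  proof -
    obtain g1 where g1: "g1 \<in> fbl_gen" "fbl_norm (\<lambda>xs. f xs - g1 xs) < e/2"
      using af e half_gt_zero by blast
    obtain g2 where g2: "g2 \<in> fbl_gen" "fbl_norm (\<lambda>xs. g xs - g2 xs) < e/2"
      using ag e half_gt_zero by blast
    have h1: "has_finite_norm (\<lambda>xs. f xs - g1 xs)" using diff_fin pf gen_props g1 by blast
    have h2: "has_finite_norm (\<lambda>xs. g xs - g2 xs)" using diff_fin pg gen_props g2 by blast
    have "fbl_norm (\<lambda>xs. f xs + g xs - (g1 xs + g2 xs)) \<le> 1 * fbl_norm (\<lambda>xs. f xs - g1 xs) + 1 * fbl_norm (\<lambda>xs. g xs - g2 xs)"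
      proof -
      have "\<forall>xs. \<bar>f xs + g xs - (g1 xs + g2 xs)\<bar> \<le> 1*\<bar>f xs - g1 xs\<bar> + 1*\<bar>g xs - g2 xs\<bar>"
        using abs_add_le[of "\<lambda>xs. f xs - g1 xs" "\<lambda>xs. g xs - g2 xs"] by (simp add: algebra_simps)
      from dom[where h="\<lambda>xs. f xs + g xs - (g1 xs + g2 xs)", OF h1 h2 zero_le_one zero_le_one this]
      show ?thesis by blast
    qed
    then have "fbl_norm (\<lambda>xs. f xs + g xs - (g1 xs + g2 xs)) < e" using g1 g2 by simp
    moreover have "(\<lambda>xs. g1 xs + g2 xs) \<in> fbl_gen" using g1 g2 by (simp add: fbl_gen.gen_add)
    ultimately show ?thesis by (intro bexI[of _ "\<lambda>xs. g1 xs + g2 xs"]) simp_all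
  qed
  moreover have "has_finite_norm (\<lambda>xs. f xs + g xs)"
    using dom[OF pf(2) pg(2) zero_le_one zero_le_one abs_add_le] by blast
  ultimately show ?thesis unfolding FBL_def using pos_hom_add[OF pf(1) pg(1)] by blast
qed


theorem mainTheorem17:
  fixes T :: "(('a::distrib_lattice \<Rightarrow> real) \<Rightarrow> real) \<Rightarrow> (('b::distrib_lattice \<Rightarrow> real) \<Rightarrow> real)"
  assumes hom: "fbl_lattice_hom T"
    and bdd: "op_bounded T"
  shows "(\<forall>ys\<in>(lstar::('b \<Rightarrow> real) set). lattice_hom_real (Phi T ys))
    \<and> (\<forall>ys\<in>(lstar::('b \<Rightarrow> real) set). \<forall>x. \<bar>Phi T ys x\<bar> \<le> op_norm T)
    \<and> (op_norm T \<le> 1 \<longrightarrow> (\<forall>ys\<in>(lstar::('b \<Rightarrow> real) set). Phi T ys \<in> (lstar::('a \<Rightarrow> real) set)))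
    \<and> (\<forall>ys\<in>(lstar::('b \<Rightarrow> real) set). \<forall>c::real. c \<ge> 0 \<longrightarrow> (\<lambda>y. c * ys y) \<in> lstar \<longrightarrow>
          Phi T (\<lambda>y. c * ys y) = (\<lambda>x. c * Phi T ys x))
    \<and> (op_norm T \<le> 1 \<longrightarrow>
          (\<forall>f\<in>(FBL::(('a \<Rightarrow> real) \<Rightarrow> real) set). \<forall>ys\<in>(lstar::('b \<Rightarrow> real) set). T f ys = f (Phi T ys)))"
proof -
  have TF: "\<And>f. f \<in> FBL \<Longrightarrow> T f \<in> FBL"
    and Tadd: "\<And>f g. f \<in> FBL \<Longrightarrow> g \<in> FBL \<Longrightarrow> T (\<lambda>xs. f xs + g xs) = (\<lambda>ys. T f ys + T g ys)"
    and Tsc: "\<And>f c. f \<in> FBL \<Longrightarrow> T (\<lambda>xs. c * f xs) = (\<lambda>ys. c * T f ys)"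
    and Tmax: "\<And>f g. f \<in> FBL \<Longrightarrow> g \<in> FBL \<Longrightarrow> T (\<lambda>xs. max (f xs) (g xs)) = (\<lambda>ys. max (T f ys) (T g ys))"
    and Tmin: "\<And>f g. f \<in> FBL \<Longrightarrow> g \<in> FBL \<Longrightarrow> T (\<lambda>xs. min (f xs) (g xs)) = (\<lambda>ys. min (T f ys) (T g ys))"
    using hom unfolding fbl_lattice_hom_def by blast+
  obtain K where K: "\<And>f. f \<in> FBL \<Longrightarrow> fbl_norm (T f) \<le> K * fbl_norm f"
    using bdd unfolding op_bounded_def by blast
  have FBLfin: "\<And>f::('c::distrib_lattice \<Rightarrow> real) \<Rightarrow> real. f \<in> FBL \<Longrightarrow> has_finite_norm f"
    and FBLpos: "\<And>f::('c::distrib_lattice \<Rightarrow> real) \<Rightarrow> real. f \<in> FBL \<Longrightarrow> pos_hom f"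
    by (simp_all add: FBL_def)
  have dF: "\<And>x::'a. delta x \<in> FBL" using gen_FBL fbl_gen.gen_delta by blast
  have dinf: "\<And>x y::'a. delta (inf x y) = (\<lambda>xs. min (delta x xs) (delta y xs))"
    by (auto simp: delta_def lstar_def lattice_hom_real_def fun_eq_iff)
  have dsup: "\<And>x y::'a. delta (sup x y) = (\<lambda>xs. max (delta x xs) (delta y xs))"
    by (auto simp: delta_def lstar_def lattice_hom_real_def fun_eq_iff)
  have P1: "\<And>ys. lattice_hom_real (Phi T ys)"
    unfolding lattice_hom_real_def Phi_def using dinf dsup Tmax[OF dF dF] Tmin[OF dF dF] by simp
  have bddS: "bdd_above {fbl_norm (T f) |f. f \<in> FBL \<and> fbl_norm f \<le> 1}"
  proof (rule bdd_aboveI[where M="\<bar>K\<bar>"])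
    fix s assume "s \<in> {fbl_norm (T f) |f. f \<in> FBL \<and> fbl_norm f \<le> 1}"
    then obtain f where f: "f \<in> FBL" "fbl_norm f \<le> 1" and s: "s = fbl_norm (T f)" by blast
    have n0: "0 \<le> fbl_norm f" using norm_nonneg FBLfin f by blast
    have "K * fbl_norm f \<le> \<bar>K\<bar> * fbl_norm f" by (rule mult_right_mono[OF abs_ge_self n0])
    also have "\<dots> \<le> \<bar>K\<bar>" by (rule mult_left_le[OF f(2) abs_ge_zero])
    finally show "s \<le> \<bar>K\<bar>" using K[OF f(1)] s by simp
  qed
  have P2: "\<bar>Phi T ys x\<bar> \<le> op_norm T" if ys: "ys \<in> lstar" for ys x
  proof -
    have "\<bar>Phi T ys x\<bar> \<le> fbl_norm (T (delta x))"
      unfolding Phi_def using eval_le_norm[OF ys] FBLfin[OF TF[OF dF]] by blast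
    also have "\<dots> \<le> op_norm T" unfolding op_norm_def
      by (rule cSup_upper[OF _ bddS]) (use dF delta_norm_le in blast)
    finally show ?thesis .
  qed
  have P3: "Phi T ys \<in> lstar" if on: "op_norm T \<le> 1" and ys: "ys \<in> lstar" for ys
    unfolding lstar_def using P1 P2[OF ys] on by (auto intro: order_trans)
  have P4: "Phi T (\<lambda>y. c * ys y) = (\<lambda>x. c * Phi T ys x)"
    if ys: "ys \<in> lstar" and c: "c \<ge> 0" and cy: "(\<lambda>y. c * ys y) \<in> lstar" for ys c
  proof
    fix x
    have "pos_hom (T (delta x))" using FBLpos TF dF by blast
    then show "Phi T (\<lambda>y. c * ys y) x = c * Phi T ys x"
      unfolding Phi_def pos_hom_def using ys c cy by blast
  qed
  have P5: "T f ys = f (Phi T ys)" if on: "op_norm T \<le> 1" and f: "f \<in> FBL" and ys: "ys \<in> lstar" for f ys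
  proof -
    define P where "P = Phi T ys"
    have PL: "P \<in> lstar" unfolding P_def by (rule P3[OF on ys])
    have gen: "T g ys = g P" if "g \<in> fbl_gen" for g
      using that
    proof (induction rule: fbl_gen.induct)
      case (gen_delta x)
      then show ?case using PL by (simp add: P_def Phi_def delta_def)
    next
      case gen_zero
      have "(\<lambda>_. 0::real) = (\<lambda>xs. 0 * delta (undefined::'a) xs)" by simp
      then have "T (\<lambda>_. 0) = (\<lambda>ys. 0 * T (delta undefined) ys)" using Tsc[OF dF] by metis
      then show ?case by simp
    next
      case (gen_add f g)
      then show ?case using Tadd[OF gen_FBL gen_FBL] by simp
    next
      case (gen_scale f c)
      then show ?case using Tsc[OF gen_FBL] by simp
    next
      case (gen_sup f g)
      then show ?case using Tmax[OF gen_FBL gen_FBL] by simp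
    next
      case (gen_inf f g)
      then show ?case using Tmin[OF gen_FBL gen_FBL] by simp
    qed
    show ?thesis
    proof (rule ccontr)
      assume ne: "T f ys \<noteq> f (Phi T ys)"
      define d where "d = \<bar>T f ys - f P\<bar>"
      have d0: "d > 0" using ne unfolding d_def P_def by simp
      define e where "e = d / (2 * (\<bar>K\<bar> + 1))"
      have e0: "e > 0" unfolding e_def using d0 by (simp add: add_pos_nonneg)
      have af: "\<forall>e>0. \<exists>h\<in>fbl_gen. fbl_norm (\<lambda>xs. f xs - h xs) < e" using f by (simp add: FBL_def)
      obtain g where g: "g \<in> fbl_gen" "fbl_norm (\<lambda>xs. f xs - g xs) < e" using af e0 by blast
      have gF: "g \<in> FBL" using gen_FBL g(1) by blast
      have mg: "(\<lambda>xs. -1 * g xs) \<in> FBL" using gen_FBL fbl_gen.gen_scale g(1) by blast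
      have hF: "(\<lambda>xs. f xs + -1 * g xs) \<in> FBL" by (rule FBL_add[OF f mg])
      have hEq: "(\<lambda>xs. f xs + -1 * g xs) = (\<lambda>xs. f xs - g xs)" by simp
      have hF': "(\<lambda>xs. f xs - g xs) \<in> FBL" using hF hEq by simp
      have Th: "T (\<lambda>xs. f xs - g xs) ys = T f ys - T g ys"
        using Tadd[OF f mg] Tsc[OF gF, of "-1"] hEq by simp
      have n0: "0 \<le> fbl_norm (\<lambda>xs. f xs - g xs)" using norm_nonneg FBLfin hF' by blast
      have "\<bar>T (\<lambda>xs. f xs - g xs) ys\<bar> \<le> fbl_norm (T (\<lambda>xs. f xs - g xs))"
        using eval_le_norm[OF ys] FBLfin[OF TF[OF hF']] by blast
      also have "\<dots> \<le> K * fbl_norm (\<lambda>xs. f xs - g xs)" by (rule K[OF hF'])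
      also have "\<dots> \<le> \<bar>K\<bar> * fbl_norm (\<lambda>xs. f xs - g xs)" by (rule mult_right_mono[OF abs_ge_self n0])
      also have "\<dots> \<le> \<bar>K\<bar> * e" using g(2) by (intro mult_left_mono) auto
      finally have A: "\<bar>T f ys - T g ys\<bar> \<le> \<bar>K\<bar> * e" using Th by simp
      have B: "\<bar>f P - g P\<bar> < e"
        using eval_le_norm[OF PL FBLfin[OF hF']] g(2) by simp
      have C: "T g ys = g P" by (rule gen[OF g(1)])
      have "d \<le> \<bar>K\<bar> * e + e" unfolding d_def using A B C by linarith
      also have "\<dots> = d / 2"
      proof -
        have pos: "\<bar>K\<bar> + 1 \<noteq> 0" using abs_ge_zero[of K] by linarith
        have gen: "k \<noteq> 0 \<Longrightarrow> k * (d / (2 * k)) = d / 2" for k :: real by (simp add: field_simps)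
        have "\<bar>K\<bar> * e + e = (\<bar>K\<bar> + 1) * e" by (simp add: algebra_simps)
        then show ?thesis unfolding e_def using gen[OF pos] by simp
      qed
      finally show False using d0 by simp
    qed
  qed
  show ?thesis using P1 P2 P3 P4 P5 by blast
qed

end
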